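(* Suppose $1 \le p, p_1, p_2 < \infty$ and $0 \le \alpha_1, \alpha_2 \le 1$ satisfy $\alpha_1 + \alpha_2 = 1$ and $\frac1p = \frac{\alpha_1}{p_1} + \frac{\alpha_2}{p_2}$. Suppose also $A = A_1 + A_2$ (non-negative integers). Let $U \subset B_R$ be a finite union of the balls $B_{K^2}$. Then $$ \| E f \|_{\mathrm{BL}^p_{k,A}(U)} \le \| E f \|^{\alpha_1}_{\mathrm{BL}^{p_1}_{k,A_1}(U)} \| E f \|^{\alpha_2}_{\mathrm{BL}^{p_2}_{k,A_2}(U)}.$$
   Context: $E f(x) := \int_{B^{n-1}} e^{ i ( x' \cdot \omega + x_n | \omega |^2) } f(\omega)\, d \omega$. $G(\omega) = (-2\omega,1)/|(-2\omega,1)|$. $B^{n-1}$ is a disjoint union of approximate balls $\tau$ of radius $K^{-1}$, $f_\tau = f 1_\tau$, $G(\tau)$ the image of $\tau$ under $G$, $\mathrm{Angle}(G(\tau),V)$ the smallest angle between nonzero vectors of $V$ and of $G(\tau)$. $B_R$ is decomposed into balls $B_{K^2}$ of radius $K^2$. For such a ball and exponent $p$, $\mu^{(p)}_{Ef}(B_{K^2}) := \min_{V_1,\dots,V_A} \max_{\tau: \mathrm{Angle}(G(\tau),V_a) > K^{-1}\,\forall a} \int_{B_{K^2}} |Ef_\tau|^p$, minimum over $(k-1)$-dimensional subspaces $V_a$ of $\mathbb{R}^n$ (when $A=0$, the maximum over all $\tau$). For $U$ a finite union of balls $B_{K^2}$, $\|Ef\|^p_{\mathrm{BL}^p_{k,A}(U)}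 := \sum_{B_{K^2}\subset U}\mu^{(p)}_{Ef}(B_{K^2})$. *)

theory Defs
  imports "HOL-Analysis.Analysis"
begin

text \<open>R^{n-1} is modelled by a Euclidean space 'a, and R^n by 'a \<times> real,
  a point x = (x', x_n).\<close>

definition Eop :: "('a::euclidean_space \<Rightarrow> complex) \<Rightarrow> 'a \<times> real \<Rightarrow> complex" where
  "Eop f x = integral (ball 0 1)
      (\<lambda>\<omega>. exp (\<i> * complex_of_real (fst x \<bullet> \<omega> + snd x * (norm \<omega>)^2)) * f \<omega>)"

definition Gmap :: "'a::euclidean_space \<Rightarrow> 'a \<times> real" where
  "Gmap \<omega> = (1 / norm (-2 *\<^sub>R \<omega>, 1::real)) *\<^sub>R (-2 *\<^sub>R \<omega>, 1::real)"

definition vangle :: "'b::real_inner \<Rightarrow> 'b \<Rightarrow> real" where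
  "vangle u v = arccos ((u \<bullet> v) / (norm u * norm v))"

definition set_angle :: "'b::real_inner set \<Rightarrow> 'b set \<Rightarrow> real" where
  "set_angle S V = Inf {vangle u v | u v. u \<in> S \<and> u \<noteq> 0 \<and> v \<in> V \<and> v \<noteq> 0}"

definition cap_decomp :: "real \<Rightarrow> 'a::euclidean_space set set \<Rightarrow> bool" where
  "cap_decomp K T \<longleftrightarrow> finite T \<and> \<Union>T = ball 0 1 \<and> pairwise disjnt T \<and>
     (\<forall>\<tau>\<in>T. \<tau> \<noteq> {} \<and> \<tau> \<in> sets lebesgue \<and> (\<exists>c. \<tau> \<subseteq> cball c (1/K)))"

definition ball_decomp :: "real \<Rightarrow> real \<Rightarrow> ('a::euclidean_space \<times> real) set set \<Rightarrow> bool" where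
  "ball_decomp K R \<B> \<longleftrightarrow> finite \<B> \<and> ball 0 R \<subseteq> \<Union>\<B> \<and> (\<forall>B\<in>\<B>. \<exists>c. B = ball c (K^2))"

definition mu :: "nat \<Rightarrow> real \<Rightarrow> nat \<Rightarrow> real \<Rightarrow> 'a::euclidean_space set set \<Rightarrow>
    ('a \<Rightarrow> complex) \<Rightarrow> ('a \<times> real) set \<Rightarrow> real" where
  "mu k K A p T f B =
     (INF V \<in> {V :: nat \<Rightarrow> ('a \<times> real) set. \<forall>a<A. subspace (V a) \<and> dim (V a) = k - 1}.
        Max (insert 0 {integral B (\<lambda>x. cmod (Eop (\<lambda>\<omega>. indicator \<tau> \<omega> * f \<omega>) x) powr p) | \<tau>.
                 \<tau> \<in> T \<and> (\<forall>a<A. set_angle (Gmap ` \<tau>) (V a) > 1 / K)}))"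

text \<open>p-th power of the broad norm: sum of mu over the balls of the decomposition contained in U.\<close>
definition BLp :: "nat \<Rightarrow> real \<Rightarrow> nat \<Rightarrow> real \<Rightarrow> 'a::euclidean_space set set \<Rightarrow>
    ('a \<Rightarrow> complex) \<Rightarrow> ('a \<times> real) set set \<Rightarrow> ('a \<times> real) set \<Rightarrow> real" where
  "BLp k K A p T f \<B> U = (\<Sum>B\<in>{B\<in>\<B>. B \<subseteq> U}. mu k K A p T f B)"

end

theory Submission
  imports Defs
begin

lemma young_scaled:
  fixes a b s t u v :: real
  assumes "0 \<le> a" "0 \<le> b" "a + b = 1" "s > 0" "t > 0" "u \<ge> 0" "v \<ge> 0"
  shows "u powr a * v powr b \<le> (a * s * u + b * t * v) / (s powr a * t powr b)"
proof (cases "u = 0 \<or> v = 0")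
  case True
  then show ?thesis using assms by (auto intro!: divide_nonneg_pos add_nonneg_nonneg)
next
  case False
  then have up: "u > 0" "v > 0" using assms by auto
  have "(s * u) powr a * (t * v) powr b \<le> a * (s * u) + b * (t * v)"
    using Youngs_inequality_0[of a b "s * u" "t * v"] assms up by auto
  then have "(s powr a * t powr b) * (u powr a * v powr b) \<le> a * s * u + b * t * v"
    using assms up by (simp add: powr_mult mult_ac)
  moreover have "s powr a * t powr b > 0" using assms by simp
  ultimately show ?thesis by (simp add: pos_le_divide_eq mult.commute)
qed

lemma holder_real:
  fixes a b U V W :: real
  assumes "0 \<le> a" "0 \<le> b" "a + b = 1" "U \<ge> 0" "V \<ge> 0"
    and bnd: "\<And>s t. s > 0 \<Longrightarrow> t > 0 \<Longrightarrow> W \<le> (a * s * U + b * t * V) / (s powr a * t powr b)"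
    and z1: "a = 0 \<Longrightarrow> U = 0 \<Longrightarrow> W \<le> 0"
    and z2: "b = 0 \<Longrightarrow> V = 0 \<Longrightarrow> W \<le> 0"
  shows "W \<le> U powr a * V powr b"
proof -
  have zero: "W \<le> 0" if a0: "a > 0" and "U = 0" and b: "b \<le> 1" "b \<ge> 0" and "V \<ge> 0"
    and bd: "\<And>s. s > 0 \<Longrightarrow> W \<le> b * V / s powr a" for a b U V
  proof (rule ccontr)
    assume "\<not> W \<le> 0" hence W: "W > 0" by simp
    define s where "s = (b * V/W + 1) powr (1/a)"
    have bv: "b * V/W \<ge> 0" using W that by simp
    have sp: "s > 0" using bv by (simp add: s_def)
    have "s powr a = b * V/W + 1" unfolding s_def using bv a0 by (simp add: powr_powr)
    then have "b * V / s powr a < W" using W bv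
      by (simp add: divide_less_eq field_simps)
    with bd[OF sp] show False by simp
  qed
  consider "U > 0" "V > 0" | "U = 0" | "V = 0" using assms by linarith
  then show ?thesis
  proof cases
    case 1
    have "W \<le> (a * (1/U) * U + b * (1/V) * V) / ((1/U) powr a * (1/V) powr b)"
      using bnd[of "1/U" "1/V"] 1 by simp
    also have "\<dots> = U powr a * V powr b" using 1 assms
      by (simp add: powr_divide)
    finally show ?thesis .
  next
    case 2
    show ?thesis
    proof (cases "a = 0")
      case True then show ?thesis using z1 2 by simp
    next
      case False
      have "W \<le> 0"
        apply (rule zero[of a U b V])
        using False assms 2 apply auto[5]
        using bnd[of _ 1] 2 by simp
      then show ?thesis using 2 by simp
    qed
  next
    case 3
    show ?thesis
    proof (cases "b = 0")
      case True then show ?thesis using z2 3 by simp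
    next
      case False
      have "W \<le> 0"
        apply (rule zero[of b V a U])
        using False assms 3 apply auto[5]
        using bnd[of 1] 3 by (simp add: mult.commute)
      then show ?thesis using 3 by simp
    qed
  qed
qed


lemma holder_integral:
  fixes u v w :: "'n::euclidean_space \<Rightarrow> real"
  assumes ab: "0 \<le> a" "0 \<le> b" "a + b = 1"
    and iu: "u integrable_on S" and iv: "v integrable_on S" and iw: "w integrable_on S"
    and pw: "\<And>x. x \<in> S \<Longrightarrow> u x \<ge> 0 \<and> v x \<ge> 0 \<and> w x = u x powr a * v x powr b"
    and z1: "a = 0 \<Longrightarrow> integral S u = 0 \<Longrightarrow> integral S w \<le> 0"
    and z2: "b = 0 \<Longrightarrow> integral S v = 0 \<Longrightarrow> integral S w \<le> 0"
  shows "integral S w \<le> integral S u powr a * integral S v powr b"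
proof (rule holder_real[OF ab])
  show "integral S u \<ge> 0" using pw by (intro integral_nonneg iu) auto
  show "integral S v \<ge> 0" using pw by (intro integral_nonneg iv) auto
  fix s t :: real assume st: "s > 0" "t > 0"
  let ?c = "s powr a * t powr b"
  have hi: "((\<lambda>x. (a * s * u x + b * t * v x) / ?c) has_integral
      (a * s * integral S u + b * t * integral S v) / ?c) S"
    by (intro has_integral_divide has_integral_add has_integral_cmult_real
        integrable_integral iu iv)
  have "integral S w \<le> integral S (\<lambda>x. (a * s * u x + b * t * v x) / ?c)"
    apply (rule integral_le[OF iw])
    using hi apply blast
    using pw young_scaled[OF ab st] by auto
  also have "\<dots> = (a * s * integral S u + b * t * integral S v) / ?c"
    using hi by (rule integral_unique)
  finally show "integral S w \<le> (a * s * integral S u + b * t * integral S v) / ?c" .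
qed (use z1 z2 in auto)

lemma holder_sum:
  fixes x y w :: "'i \<Rightarrow> real"
  assumes ab: "0 \<le> a" "0 \<le> b" "a + b = 1" and fin: "finite I"
    and pw: "\<And>i. i \<in> I \<Longrightarrow> x i \<ge> 0 \<and> y i \<ge> 0 \<and> w i \<le> x i powr a * y i powr b"
  shows "sum w I \<le> sum x I powr a * sum y I powr b"
proof (rule holder_real[OF ab])
  show "sum x I \<ge> 0" using pw by (intro sum_nonneg) auto
  show "sum y I \<ge> 0" using pw by (intro sum_nonneg) auto
  fix s t :: real assume st: "s > 0" "t > 0"
  let ?c = "s powr a * t powr b"
  have "sum w I \<le> (\<Sum>i\<in>I. (a * s * x i + b * t * y i) / ?c)"
    using pw young_scaled[OF ab st] by (intro sum_mono) (meson order_trans)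
  also have "\<dots> = (a * s * sum x I + b * t * sum y I) / ?c"
    unfolding sum_divide_distrib[symmetric] by (simp add: sum.distrib sum_distrib_left)
  finally show "sum w I \<le> (a * s * sum x I + b * t * sum y I) / ?c" .
next
  assume "a = 0" "sum x I = 0"
  then have "\<forall>i\<in>I. x i = 0" using pw fin by (subst sum_nonneg_eq_0_iff[symmetric]) auto
  then show "sum w I \<le> 0" using pw \<open>a = 0\<close> by (intro sum_nonpos) fastforce
next
  assume "b = 0" "sum y I = 0"
  then have "\<forall>i\<in>I. y i = 0" using pw fin by (subst sum_nonneg_eq_0_iff[symmetric]) auto
  then show "sum w I \<le> 0" using pw \<open>b = 0\<close> by (intro sum_nonpos) fastforce
qed


lemma Eop_integrand_int:
  fixes g :: "'a::euclidean_space \<Rightarrow> complex"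
  assumes g: "g absolutely_integrable_on ball 0 1"
  shows "(\<lambda>\<omega>. exp (\<i> * complex_of_real (fst x \<bullet> \<omega> + snd x * (norm \<omega>)^2)) * g \<omega>)
           absolutely_integrable_on ball 0 1"
proof (rule absolutely_integrable_bounded_measurable_product[OF bilinear_times _ _ _ g])
  show "(\<lambda>\<omega>. exp (\<i> * complex_of_real (fst x \<bullet> \<omega> + snd x * (norm \<omega>)^2)))
          \<in> borel_measurable (lebesgue_on (ball 0 1))"
    by (intro continuous_imp_measurable_on_sets_lebesgue continuous_intros) auto
  show "ball 0 1 \<in> sets lebesgue" by auto
  show "bounded ((\<lambda>\<omega>. exp (\<i> * complex_of_real (fst x \<bullet> \<omega> + snd x * (norm \<omega>)^2))) ` ball 0 1)"
    unfolding bounded_iff by (intro exI[of _ 1]) auto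
qed

lemma Eop_cont:
  fixes g :: "'a::euclidean_space \<Rightarrow> complex"
  assumes g: "g absolutely_integrable_on ball 0 1"
  shows "continuous_on UNIV (Eop g)"
proof (rule continuous_on_sequentiallyI)
  fix y :: "nat \<Rightarrow> 'a \<times> real" and x assume y: "y \<longlonglongrightarrow> x"
  let ?F = "\<lambda>z \<omega>. exp (\<i> * complex_of_real (fst z \<bullet> \<omega> + snd z * (norm \<omega>)^2)) * g \<omega>"
  have "(\<lambda>k. integral (ball 0 1) (?F (y k))) \<longlonglongrightarrow> integral (ball 0 1) (?F x)"
  proof (rule dominated_convergence(2))
    show "?F (y k) integrable_on ball 0 1" for k
      using Eop_integrand_int[OF g] set_lebesgue_integral_eq_integral(1) by blast
    show "(\<lambda>\<omega>. norm (g \<omega>)) integrable_on ball 0 1"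
      using g absolutely_integrable_on_def by blast
    show "norm (?F (y k) \<omega>) \<le> norm (g \<omega>)" for k \<omega>
      by (simp add: norm_mult)
    show "(\<lambda>k. ?F (y k) \<omega>) \<longlonglongrightarrow> ?F x \<omega>" for \<omega>
      using y by (intro tendsto_intros tendsto_fst tendsto_snd)
  qed
  then show "(\<lambda>n. Eop g (y n)) \<longlonglongrightarrow> Eop g x"
    by (simp add: Eop_def)
qed

lemma cont_compact_integrable:
  fixes u :: "'n::euclidean_space \<Rightarrow> real"
  assumes "compact S" "continuous_on S u"
  shows "u integrable_on S"
  using borel_integrable_compact[OF assms]
  by (intro set_borel_integral_eq_integral(1)) (simp add: set_integrable_def)

lemma zero_on_ball:
  fixes u :: "'n::euclidean_space \<Rightarrow> real"
  assumes r: "r > 0" and cu: "continuous_on (cball c r) u"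
    and nn: "\<And>x. x \<in> cball c r \<Longrightarrow> u x \<ge> 0"
    and i0: "integral (ball c r) u = 0" and x: "x \<in> ball c r"
  shows "u x = 0"
proof -
  have neg: "negligible (cball c r - ball c r)"
    using negligible_sphere[of c r] by (simp add: cball_diff_eq_sphere)
  have iu: "u integrable_on cball c r" using cu by (intro cont_compact_integrable) auto
  have "integral (cball c r) u = integral (ball c r) u"
    by (rule integral_spike_set) (use neg in \<open>auto intro: negligible_subset\<close>)
  then have hi: "(u has_integral 0) (cball c r)" using iu i0 by (metis has_integral_integrable_integral)
  have em: "emeasure lborel (cball c r) = emeasure lborel (ball c r)"
  proof -
    from negligible_sphere[of c r] have "sphere c r \<in> null_sets lborel"
      by (auto simp: null_sets_completion_iff negligible_iff_null_sets negligible_convex_frontier)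
    hence "emeasure lborel (ball c r \<union> sphere c r) = emeasure lborel (ball c r)"
      by (intro emeasure_Un_null_set) auto
    also have "ball c r \<union> sphere c r = cball c r" by auto
    finally show ?thesis .
  qed
  have pos: "0 < emeasure lborel (ball c r)"
  proof -
    have "0 < measure lborel (ball c r)" using content_ball_pos[OF r, of c] by simp
    then show ?thesis using emeasure_lborel_ball_finite[of c r]
      by (simp add: emeasure_eq_ennreal_measure)
  qed
  show ?thesis
    by (rule has_integral_0_closure_imp_0[of "ball c r" u x])
       (use r cu nn em pos hi x emeasure_lborel_ball_finite[of c r] in \<open>auto\<close>)
qed


definition Madm :: "real \<Rightarrow> nat \<Rightarrow> real \<Rightarrow> 'a::euclidean_space set set \<Rightarrow>
    ('a \<Rightarrow> complex) \<Rightarrow> (nat \<Rightarrow> ('a \<times> real) set) \<Rightarrow> ('a \<times> real) set \<Rightarrow> real" where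
  "Madm K A p T f V B = Max (insert 0 {integral B (\<lambda>x. cmod (Eop (\<lambda>\<omega>. indicator \<tau> \<omega> * f \<omega>) x) powr p) | \<tau>.
                 \<tau> \<in> T \<and> (\<forall>a<A. set_angle (Gmap ` \<tau>) (V a) > 1 / K)})"

definition SV :: "nat \<Rightarrow> nat \<Rightarrow> (nat \<Rightarrow> ('a::euclidean_space \<times> real) set) set" where
  "SV k A = {V. \<forall>a<A. subspace (V a) \<and> dim (V a) = k - 1}"

lemma mu_eq: "mu k K A p T f B = (INF V \<in> SV k A. Madm K A p T f V B)"
  by (simp add: mu_def Madm_def SV_def)

lemma Madm_facts:
  assumes fin: "finite T"
  shows "Madm K A p T f V B \<in> insert 0 ((\<lambda>\<tau>. integral B (\<lambda>x. cmod (Eop (\<lambda>\<omega>. indicator \<tau> \<omega> * f \<omega>) x) powr p)) ` T)"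
    and "Madm K A p T f V B \<ge> 0"
    and "\<tau> \<in> T \<Longrightarrow> (\<forall>a<A. set_angle (Gmap ` \<tau>) (V a) > 1 / K) \<Longrightarrow>
          integral B (\<lambda>x. cmod (Eop (\<lambda>\<omega>. indicator \<tau> \<omega> * f \<omega>) x) powr p) \<le> Madm K A p T f V B"
    and "c \<ge> 0 \<Longrightarrow> (\<And>\<tau>. \<tau> \<in> T \<Longrightarrow> (\<forall>a<A. set_angle (Gmap ` \<tau>) (V a) > 1 / K) \<Longrightarrow>
          integral B (\<lambda>x. cmod (Eop (\<lambda>\<omega>. indicator \<tau> \<omega> * f \<omega>) x) powr p) \<le> c) \<Longrightarrow>
          Madm K A p T f V B \<le> c"
proof -
  let ?S = "{integral B (\<lambda>x. cmod (Eop (\<lambda>\<omega>. indicator \<tau> \<omega> * f \<omega>) x) powr p) | \<tau>.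
                 \<tau> \<in> T \<and> (\<forall>a<A. set_angle (Gmap ` \<tau>) (V a) > 1 / K)}"
  have sub: "?S \<subseteq> (\<lambda>\<tau>. integral B (\<lambda>x. cmod (Eop (\<lambda>\<omega>. indicator \<tau> \<omega> * f \<omega>) x) powr p)) ` T"
    by auto
  then have finS: "finite (insert 0 ?S)" using fin by (auto intro: finite_subset)
  have "Max (insert 0 ?S) \<in> insert 0 ?S" using finS by (intro Max_in) auto
  then show "Madm K A p T f V B \<in> insert 0 ((\<lambda>\<tau>. integral B (\<lambda>x. cmod (Eop (\<lambda>\<omega>. indicator \<tau> \<omega> * f \<omega>) x) powr p)) ` T)"
    unfolding Madm_def using sub by blast
  show "Madm K A p T f V B \<ge> 0" unfolding Madm_def using finS by (intro Max_ge) auto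
  show "\<tau> \<in> T \<Longrightarrow> (\<forall>a<A. set_angle (Gmap ` \<tau>) (V a) > 1 / K) \<Longrightarrow>
          integral B (\<lambda>x. cmod (Eop (\<lambda>\<omega>. indicator \<tau> \<omega> * f \<omega>) x) powr p) \<le> Madm K A p T f V B"
    unfolding Madm_def using finS by (intro Max_ge) auto
  show "c \<ge> 0 \<Longrightarrow> (\<And>\<tau>. \<tau> \<in> T \<Longrightarrow> (\<forall>a<A. set_angle (Gmap ` \<tau>) (V a) > 1 / K) \<Longrightarrow>
          integral B (\<lambda>x. cmod (Eop (\<lambda>\<omega>. indicator \<tau> \<omega> * f \<omega>) x) powr p) \<le> c) \<Longrightarrow>
          Madm K A p T f V B \<le> c"
    unfolding Madm_def using finS by (subst Max_le_iff) auto
qed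

lemma SV_ne:
  assumes "k - 1 \<le> DIM('a::euclidean_space \<times> real)"
  shows "SV k A \<noteq> ({} :: (nat \<Rightarrow> ('a \<times> real) set) set)"
proof -
  have "k - 1 \<le> dim (UNIV :: ('a \<times> real) set)" using assms by (simp add: dim_UNIV)
  then obtain W :: "('a \<times> real) set" where "subspace W" "dim W = k - 1"
    by (metis choose_subspace_of_subspace)
  then have "(\<lambda>_. W) \<in> SV k A" by (simp add: SV_def)
  then show ?thesis by blast
qed

lemma mu_facts:
  fixes T :: "'a::euclidean_space set set"
  assumes fin: "finite T" and kd: "k - 1 \<le> DIM('a \<times> real)"
  shows "\<exists>V\<in>SV k A. mu k K A p T f B = Madm K A p T f V B"
    and "V \<in> SV k A \<Longrightarrow> mu k K A p T f B \<le> Madm K A p T f V B"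
    and "mu k K A p T f B \<ge> 0"
proof -
  let ?X = "(\<lambda>V. Madm K A p T f V B) ` SV k A"
  have "?X \<subseteq> insert 0 ((\<lambda>\<tau>. integral B (\<lambda>x. cmod (Eop (\<lambda>\<omega>. indicator \<tau> \<omega> * f \<omega>) x) powr p)) ` T)"
    using Madm_facts(1)[OF fin] by blast
  then have finX: "finite ?X" using fin by (auto intro: finite_subset)
  have neX: "?X \<noteq> {}" using SV_ne[OF kd] by blast
  have mu: "mu k K A p T f B = Min ?X" unfolding mu_eq using cInf_eq_Min[OF finX neX] by simp
  have "Min ?X \<in> ?X" using finX neX by (rule Min_in)
  then show "\<exists>V\<in>SV k A. mu k K A p T f B = Madm K A p T f V B" using mu by auto
  show "V \<in> SV k A \<Longrightarrow> mu k K A p T f B \<le> Madm K A p T f V B" using mu finX by simp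
  show "mu k K A p T f B \<ge> 0" using mu finX neX Madm_facts(2)[OF fin] by simp
qed


lemma ind_absint:
  fixes f :: "'a::euclidean_space \<Rightarrow> complex"
  assumes f: "f absolutely_integrable_on ball 0 1" and \<tau>: "\<tau> \<in> sets lebesgue"
  shows "(\<lambda>\<omega>. indicator \<tau> \<omega> * f \<omega>) absolutely_integrable_on ball 0 1"
proof (rule absolutely_integrable_bounded_measurable_product[OF bilinear_times _ _ _ f])
  show "(indicator \<tau> :: 'a \<Rightarrow> complex) \<in> borel_measurable (lebesgue_on (ball 0 1))"
    by (intro measurable_restrict_space1 borel_measurable_indicator \<tau>)
  show "ball 0 1 \<in> sets lebesgue" by auto
  show "bounded ((indicator \<tau> :: 'a \<Rightarrow> complex) ` ball 0 1)"
    unfolding bounded_iff by (intro exI[of _ 1]) (simp add: indicator_def)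
qed

lemma cont_pow_Eop:
  fixes g :: "'a::euclidean_space \<Rightarrow> complex"
  assumes g: "g absolutely_integrable_on ball 0 1" and q: "q > 0"
  shows "continuous_on UNIV (\<lambda>x. cmod (Eop g x) powr q)"
proof (rule continuous_on_powr')
  show "continuous_on UNIV (\<lambda>x. cmod (Eop g x))"
    by (intro continuous_on_norm Eop_cont[OF g])
qed (use q in auto)

lemma ball_int:
  fixes u :: "'n::euclidean_space \<Rightarrow> real"
  assumes "continuous_on UNIV u"
  shows "u integrable_on ball c r"
proof -
  have iu: "u integrable_on cball c r"
    by (rule cont_compact_integrable) (use assms in \<open>auto intro: continuous_on_subset\<close>)
  have ng: "negligible (cball c r - ball c r)"
    using negligible_sphere[of c r] by (simp add: cball_diff_eq_sphere)
  show ?thesis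
    apply (rule integrable_spike_set[OF iu])
    apply (rule negligible_subset[OF ng]) apply blast
    apply (rule negligible_subset[of "{}"]) apply simp using ball_subset_cball apply blast
    done
qed

lemma ball_bound:
  fixes g :: "'a::euclidean_space \<Rightarrow> complex"
  assumes g: "g absolutely_integrable_on ball 0 1"
    and r: "r > 0"
    and p: "p > 0" "p1 > 0" "p2 > 0"
    and ab: "0 \<le> a" "0 \<le> b" "a + b = 1" "p1 * a + p2 * b = p"
  shows "integral (ball c r) (\<lambda>x. cmod (Eop g x) powr p)
     \<le> integral (ball c r) (\<lambda>x. cmod (Eop g x) powr p1) powr a
       * integral (ball c r) (\<lambda>x. cmod (Eop g x) powr p2) powr b"
proof -
  have zero: "integral (ball c r) (\<lambda>x. cmod (Eop g x) powr p) \<le> 0"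
    if q: "q > 0" and i0: "integral (ball c r) (\<lambda>x. cmod (Eop g x) powr q) = 0" for q
  proof -
    have "cmod (Eop g x) powr q = 0" if "x \<in> ball c r" for x
      by (rule zero_on_ball[OF r _ _ i0 that])
         (use cont_pow_Eop[OF g q] in \<open>auto intro: continuous_on_subset\<close>)
    then have "\<And>x. x \<in> ball c r \<Longrightarrow> cmod (Eop g x) powr p = 0" by simp
    then have "integral (ball c r) (\<lambda>x. cmod (Eop g x) powr p) = integral (ball c r) (\<lambda>x. 0)"
      by (intro integral_cong) auto
    then show ?thesis by simp
  qed
  show ?thesis
  proof (rule holder_integral[OF ab(1-3)])
    show "(\<lambda>x. cmod (Eop g x) powr p1) integrable_on ball c r"
      by (intro ball_int cont_pow_Eop g p)
    show "(\<lambda>x. cmod (Eop g x) powr p2) integrable_on ball c r"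
      by (intro ball_int cont_pow_Eop g p)
    show "(\<lambda>x. cmod (Eop g x) powr p) integrable_on ball c r"
      by (intro ball_int cont_pow_Eop g p)
    fix x
    show "0 \<le> cmod (Eop g x) powr p1 \<and> 0 \<le> cmod (Eop g x) powr p2 \<and>
          cmod (Eop g x) powr p = (cmod (Eop g x) powr p1) powr a * (cmod (Eop g x) powr p2) powr b"
    proof (cases "Eop g x = 0")
      case False
      then show ?thesis using ab by (simp add: powr_powr flip: powr_add)
    qed simp
  qed (use zero p in auto)
qed


lemma int_nonneg_Eop:
  fixes g :: "'a::euclidean_space \<Rightarrow> complex"
  assumes g: "g absolutely_integrable_on ball 0 1" and q: "q > 0"
  shows "0 \<le> integral (ball c r) (\<lambda>x. cmod (Eop g x) powr q)"
  by (intro integral_nonneg ball_int cont_pow_Eop g q) simp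

theorem lemma4p2:
  fixes f :: "'a::euclidean_space \<Rightarrow> complex"
    and T :: "'a set set"
    and \<B> \<U> :: "('a \<times> real) set set"
    and U :: "('a \<times> real) set"
    and K R p p1 p2 \<alpha>1 \<alpha>2 :: real
    and k A A1 A2 :: nat
  assumes "f absolutely_integrable_on ball 0 1"
    and "K > 0" and "R > 0"
    and "2 \<le> k" and "k \<le> DIM('a \<times> real)"
    and "cap_decomp K T"
    and "ball_decomp K R \<B>"
    and "\<U> \<subseteq> \<B>" and "U = \<Union>\<U>"
    and "1 \<le> p" and "1 \<le> p1" and "1 \<le> p2"
    and "0 \<le> \<alpha>1" and "\<alpha>1 \<le> 1" and "0 \<le> \<alpha>2" and "\<alpha>2 \<le> 1"
    and "\<alpha>1 + \<alpha>2 = 1"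
    and "1 / p = \<alpha>1 / p1 + \<alpha>2 / p2"
    and "A = A1 + A2"
  shows "BLp k K A p T f \<B> U powr (1 / p)
          \<le> (BLp k K A1 p1 T f \<B> U powr (1 / p1)) powr \<alpha>1
             * (BLp k K A2 p2 T f \<B> U powr (1 / p2)) powr \<alpha>2"
proof -
  note f = assms(1)
  define a where "a = \<alpha>1 * p / p1"
  define b where "b = \<alpha>2 * p / p2"
  have pp: "p > 0" "p1 > 0" "p2 > 0" using assms by auto
  have a0: "0 \<le> a" "0 \<le> b" using assms pp by (auto simp: a_def b_def)
  have "a + b = p * (\<alpha>1 / p1 + \<alpha>2 / p2)" by (simp add: a_def b_def field_simps)
  also have "\<dots> = p * (1 / p)" using assms(18) by simp
  also have "\<dots> = 1" using pp by simp
  finally have ab1: "a + b = 1" .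
  have abp: "p1 * a + p2 * b = p" using pp assms(17) by (simp add: a_def b_def field_simps flip: distrib_right)
  have finT: "finite T" using assms(6) by (simp add: cap_decomp_def)
  have Tleb: "\<tau> \<in> sets lebesgue" if "\<tau> \<in> T" for \<tau> using assms(6) that by (simp add: cap_decomp_def)
  have kd: "k - 1 \<le> DIM('a \<times> real)" using assms by simp
  have K2: "K^2 > 0" using assms by simp
  have perball: "mu k K A p T f B \<le> mu k K A1 p1 T f B powr a * mu k K A2 p2 T f B powr b"
    if BB: "B \<in> \<B>" for B
  proof -
    obtain c where B: "B = ball c (K^2)" using assms(7) BB unfolding ball_decomp_def by blast
    obtain V1 where V1: "V1 \<in> SV k A1" "mu k K A1 p1 T f B = Madm K A1 p1 T f V1 B"
      using mu_facts(1)[OF finT kd] by blast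
    obtain V2 where V2: "V2 \<in> SV k A2" "mu k K A2 p2 T f B = Madm K A2 p2 T f V2 B"
      using mu_facts(1)[OF finT kd] by blast
    define V where "V = (\<lambda>i. if i < A1 then V1 i else V2 (i - A1))"
    have V: "V \<in> SV k A" using V1(1) V2(1) assms(19) unfolding SV_def V_def by auto
    have "mu k K A p T f B \<le> Madm K A p T f V B" using mu_facts(2)[OF finT kd V] .
    also have "\<dots> \<le> Madm K A1 p1 T f V1 B powr a * Madm K A2 p2 T f V2 B powr b"
    proof (rule Madm_facts(4)[OF finT])
      show "0 \<le> Madm K A1 p1 T f V1 B powr a * Madm K A2 p2 T f V2 B powr b" by simp
      fix \<tau> assume \<tau>: "\<tau> \<in> T" and adm: "\<forall>i<A. set_angle (Gmap ` \<tau>) (V i) > 1 / K"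
      have adm1: "\<forall>i<A1. set_angle (Gmap ` \<tau>) (V1 i) > 1 / K"
      proof (intro allI impI)
        fix i assume "i < A1"
        then have "i < A" "V i = V1 i" using assms(19) by (auto simp: V_def)
        then show "set_angle (Gmap ` \<tau>) (V1 i) > 1 / K" using adm by metis
      qed
      have adm2: "\<forall>i<A2. set_angle (Gmap ` \<tau>) (V2 i) > 1 / K"
      proof (intro allI impI)
        fix i assume i: "i < A2"
        then have "i + A1 < A" using assms(19) by simp
        moreover have "V (i + A1) = V2 i" by (simp add: V_def)
        ultimately show "set_angle (Gmap ` \<tau>) (V2 i) > 1 / K" using adm by metis
      qed
      note g = ind_absint[OF f Tleb[OF \<tau>]]
      have "integral B (\<lambda>x. cmod (Eop (\<lambda>\<omega>. indicator \<tau> \<omega> * f \<omega>) x) powr p)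
        \<le> integral B (\<lambda>x. cmod (Eop (\<lambda>\<omega>. indicator \<tau> \<omega> * f \<omega>) x) powr p1) powr a
          * integral B (\<lambda>x. cmod (Eop (\<lambda>\<omega>. indicator \<tau> \<omega> * f \<omega>) x) powr p2) powr b"
        unfolding B by (rule ball_bound[OF g K2 pp a0 ab1 abp])
      also have "\<dots> \<le> Madm K A1 p1 T f V1 B powr a * Madm K A2 p2 T f V2 B powr b"
        apply (intro mult_mono powr_mono2 a0)
        unfolding B
             apply (rule int_nonneg_Eop[OF g pp(2)])
            apply (rule Madm_facts(3)[OF finT \<tau> adm1, unfolded B])
           apply (rule int_nonneg_Eop[OF g pp(3)])
          apply (rule Madm_facts(3)[OF finT \<tau> adm2, unfolded B])
         apply simp
        apply simp
        done
      finally show "integral B (\<lambda>x. cmod (Eop (\<lambda>\<omega>. indicator \<tau> \<omega> * f \<omega>) x) powr p)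
        \<le> Madm K A1 p1 T f V1 B powr a * Madm K A2 p2 T f V2 B powr b" .
    qed
    finally show ?thesis using V1(2) V2(2) by simp
  qed
  define BB where "BB = {B \<in> \<B>. B \<subseteq> U}"
  have finBB: "finite BB" using assms(7) by (simp add: BB_def ball_decomp_def)
  let ?Z = "BLp k K A p T f \<B> U"
  let ?X = "BLp k K A1 p1 T f \<B> U"
  let ?Y = "BLp k K A2 p2 T f \<B> U"
  have sumle: "?Z \<le> ?X powr a * ?Y powr b"
    unfolding BLp_def BB_def[symmetric]
  proof (rule holder_sum[OF a0 ab1 finBB])
    fix B assume "B \<in> BB"
    then show "0 \<le> mu k K A1 p1 T f B \<and> 0 \<le> mu k K A2 p2 T f B \<and>
         mu k K A p T f B \<le> mu k K A1 p1 T f B powr a * mu k K A2 p2 T f B powr b"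
      using mu_facts(3)[OF finT kd] perball by (auto simp: BB_def)
  qed
  have Z0: "?Z \<ge> 0" unfolding BLp_def using mu_facts(3)[OF finT kd] by (intro sum_nonneg) auto
  have X0: "?X \<ge> 0" unfolding BLp_def using mu_facts(3)[OF finT kd] by (intro sum_nonneg) auto
  have Y0: "?Y \<ge> 0" unfolding BLp_def using mu_facts(3)[OF finT kd] by (intro sum_nonneg) auto
  have e1: "a * (1 / p) = 1 / p1 * \<alpha>1" using pp by (simp add: a_def)
  have e2: "b * (1 / p) = 1 / p2 * \<alpha>2" using pp by (simp add: b_def)
  have "?Z powr (1 / p) \<le> (?X powr a * ?Y powr b) powr (1 / p)"
    using sumle Z0 pp by (intro powr_mono2) auto
  also have "\<dots> = ?X powr (a * (1 / p)) * ?Y powr (b * (1 / p))"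
    using X0 Y0 by (simp add: powr_mult powr_powr)
  also have "\<dots> = (?X powr (1 / p1)) powr \<alpha>1 * (?Y powr (1 / p2)) powr \<alpha>2"
    unfolding e1 e2 by (simp add: powr_powr)
  finally show ?thesis .
qed

end
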